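(* Let $q$ be a prime power, $h\geq 2$, and let $f:\mathbb{F}_{q^h}\to\mathbb{F}_q$ be any nonzero $\mathbb{F}_q$-linear functional. Then there exist $\alpha\in\mathbb{F}_{q^h}\setminus\mathbb{F}_q$ and an $\mathbb{F}_q$-linear functional $g:\mathbb{F}_{q^h}\to\mathbb{F}_q$ such that (1) $g(1)=g(\alpha)=1$; (2) $f(1/\alpha)\neq 0$; (3) $f\left(\frac{k-1}{k(k-1)\alpha-k^2}\right)\neq 1$ for all $k\in\mathbb{F}_q\setminus\{0,1\}$. *)

theory Defs
  imports Main
begin

definition is_subfield :: "'a::field set \<Rightarrow> bool" where
  "is_subfield K \<longleftrightarrow> 0 \<in> K \<and> 1 \<in> K \<and>
     (\<forall>x\<in>K. \<forall>y\<in>K. x + y \<in> K \<and> x * y \<in> K) \<and>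
     (\<forall>x\<in>K. - x \<in> K) \<and> (\<forall>x\<in>K. x \<noteq> 0 \<longrightarrow> inverse x \<in> K)"

definition linear_functional :: "'a::field set \<Rightarrow> ('a \<Rightarrow> 'a) \<Rightarrow> bool" where
  "linear_functional K f \<longleftrightarrow> (\<forall>x. f x \<in> K) \<and>
     (\<forall>x y. f (x + y) = f x + f y) \<and>
     (\<forall>c\<in>K. \<forall>x. f (c * x) = c * f x)"

end

theory Submission
  imports Defs
begin

lemma sf_basic:
  assumes "is_subfield K"
  shows "0 \<in> K" "1 \<in> K" "x \<in> K \<Longrightarrow> y \<in> K \<Longrightarrow> x + y \<in> K"
    "x \<in> K \<Longrightarrow> y \<in> K \<Longrightarrow> x * y \<in> K"
    "x \<in> K \<Longrightarrow> - x \<in> K"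
  using assms unfolding is_subfield_def by auto

lemma sf_diff:
  assumes "is_subfield K" "x \<in> K" "y \<in> K" shows "x - y \<in> K"
  using sf_basic[OF assms(1)] assms by (metis diff_conv_add_uminus)

lemma sf_div:
  assumes "is_subfield K" "x \<in> K" "y \<in> K" shows "x / y \<in> K"
proof (cases "y = 0")
  case True then show ?thesis using sf_basic[OF assms(1)] by simp
next
  case False
  then have "inverse y \<in> K" using assms unfolding is_subfield_def by auto
  then show ?thesis using sf_basic(4)[OF assms(1) assms(2)] by (simp add: divide_inverse)
qed

lemma lf_basic:
  assumes "linear_functional K f"
  shows "f x \<in> K" "f (x + y) = f x + f y" "c \<in> K \<Longrightarrow> f (c * x) = c * f x"
  using assms unfolding linear_functional_def by auto

lemma lf_0:
  assumes "linear_functional K f" shows "f 0 = 0"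
proof -
  have "f 0 = f 0 + f 0" using lf_basic(2)[OF assms, of 0 0] by simp
  then show ?thesis by (metis add.right_neutral add_left_cancel)
qed

lemma lf_diff:
  assumes "linear_functional K f" shows "f (x - y) = f x - f y"
  using lf_basic(2)[OF assms, of "x - y" y] by simp

lemma g_exists:
  fixes K :: "'a::field set"
  assumes sf: "is_subfield K" and lf: "linear_functional K f"
    and x0: "f x0 \<noteq> 0" and al: "\<alpha> \<notin> K"
  shows "\<exists>g. linear_functional K g \<and> g 1 = 1 \<and> g \<alpha> = 1"
proof -
  have fx0K: "f x0 \<in> K" using lf_basic(1)[OF lf] .
  define c0 where "c0 = (1 / f x0) * x0"
  have ifK: "1 / f x0 \<in> K" using sf_div[OF sf sf_basic(2)[OF sf] fx0K] .
  have fc0: "f c0 = 1" unfolding c0_def using lf_basic(3)[OF lf ifK] x0 by simp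
  define \<beta> where "\<beta> = f (c0 * \<alpha>)"
  have bK: "\<beta> \<in> K" unfolding \<beta>_def using lf_basic(1)[OF lf] .
  define \<gamma> where "\<gamma> = \<alpha> - \<beta>"
  have g0: "\<gamma> \<noteq> 0" unfolding \<gamma>_def using al bK by auto
  define c1 where "c1 = x0 / \<gamma>"
  define d where "d = f (c1 * \<alpha>) - \<beta> * f c1"
  have "d = f (c1 * \<alpha> - \<beta> * c1)"
    unfolding d_def using lf_diff[OF lf] lf_basic(3)[OF lf bK] by simp
  also have "c1 * \<alpha> - \<beta> * c1 = c1 * \<gamma>" unfolding \<gamma>_def by (simp add: algebra_simps)
  also have "c1 * \<gamma> = x0" unfolding c1_def using g0 by simp
  finally have dd: "d = f x0" .
  define b where "b = (1 - \<beta>) / d"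
  define a where "a = 1 - b * f c1"
  have bK2: "b \<in> K" unfolding b_def dd
    using sf_div[OF sf sf_diff[OF sf sf_basic(2)[OF sf] bK] fx0K] .
  have aK: "a \<in> K" unfolding a_def
    using sf_diff[OF sf sf_basic(2)[OF sf] sf_basic(4)[OF sf bK2 lf_basic(1)[OF lf]]] .
  define g where "g x = a * f (c0 * x) + b * f (c1 * x)" for x
  have "linear_functional K g"
    unfolding linear_functional_def
  proof (intro conjI allI ballI)
    fix x show "g x \<in> K" unfolding g_def
      using sf_basic(3,4)[OF sf] aK bK2 lf_basic(1)[OF lf] by blast
  next
    fix x y show "g (x + y) = g x + g y" unfolding g_def
      using lf_basic(2)[OF lf] by (simp add: distrib_left)
  next
    fix c x assume cK: "c \<in> K"
    have "c0 * (c * x) = c * (c0 * x)" "c1 * (c * x) = c * (c1 * x)" by (simp_all add: ac_simps)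
    then have "f (c0 * (c * x)) = c * f (c0 * x)" "f (c1 * (c * x)) = c * f (c1 * x)"
      using lf_basic(3)[OF lf cK] by presburger+
    then show "g (c * x) = c * g x" unfolding g_def
      by (simp add: algebra_simps)
  qed
  moreover have "g 1 = 1" unfolding g_def a_def using fc0 by simp
  moreover have "g \<alpha> = 1"
  proof -
    have "g \<alpha> = a * \<beta> + b * f (c1 * \<alpha>)" unfolding g_def \<beta>_def by simp
    also have "\<dots> = \<beta> + b * d" unfolding a_def d_def by (simp add: algebra_simps)
    also have "\<dots> = 1" unfolding b_def using x0 dd by simp
    finally show ?thesis .
  qed
  ultimately show ?thesis by blast
qed

theorem proposition3p5:
  fixes K :: "'a::{field,finite} set" and q h :: nat and f :: "'a \<Rightarrow> 'a"
  assumes "is_subfield K"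
    and "card K = q"
    and "h \<ge> 2"
    and "card (UNIV :: 'a set) = q ^ h"
    and "linear_functional K f"
    and "\<exists>x. f x \<noteq> 0"
  shows "\<exists>\<alpha> g. \<alpha> \<notin> K \<and> linear_functional K g \<and>
           g 1 = 1 \<and> g \<alpha> = 1 \<and>
           f (1 / \<alpha>) \<noteq> 0 \<and>
           (\<forall>k\<in>K. k \<noteq> 0 \<and> k \<noteq> 1 \<longrightarrow>
              f ((k - 1) / (k * (k - 1) * \<alpha> - k ^ 2)) \<noteq> 1)"
proof -
  note sf = assms(1) and lf = assms(5)
  obtain x0 where x0: "f x0 \<noteq> 0" using assms(6) by blast
  have fx0K: "f x0 \<in> K" using lf_basic(1)[OF lf] .
  define H where "H = {x. f x = 0}"
  have fib: "card {x. f x = v} = card H" if vK: "v \<in> K" for v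
  proof -
    define xv where "xv = (v / f x0) * x0"
    have "v / f x0 \<in> K" using sf_div[OF sf vK fx0K] .
    then have "f xv = (v / f x0) * f x0" unfolding xv_def by (rule lf_basic(3)[OF lf])
    then have fxv: "f xv = v" using x0 by simp
    have "{x. f x = v} = (+) xv ` H"
    proof (intro set_eqI iffI)
      fix x assume "x \<in> {x. f x = v}"
      then have "x - xv \<in> H" unfolding H_def using lf_diff[OF lf] fxv by simp
      then show "x \<in> (+) xv ` H" by (metis add_diff_cancel_left' diff_add_cancel image_eqI add.commute)
    next
      fix x assume "x \<in> (+) xv ` H"
      then show "x \<in> {x. f x = v}" unfolding H_def using lf_basic(2)[OF lf] fxv by auto
    qed
    then show ?thesis by (simp add: card_image)
  qed
  have q2: "q \<ge> 2"
  proof -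
    have "{0,1} \<subseteq> K" using sf_basic[OF sf] by auto
    then have "card {0::'a,1} \<le> card K" by (rule card_mono[rotated]) simp
    then show ?thesis using assms(2) by simp
  qed
  obtain h' where hh: "h = Suc h'" using assms(3) by (cases h) auto
  have qh: "q ^ h = q * q ^ (h - 1)" unfolding hh by simp
  have "UNIV = (\<Union>v\<in>K. {x. f x = v})" using lf_basic(1)[OF lf] by auto
  moreover have "card (\<Union>v\<in>K. {x. f x = v}) = (\<Sum>v\<in>K. card {x. f x = v})"
    by (rule card_UN_disjoint) auto
  ultimately have "card (UNIV::'a set) = (\<Sum>v\<in>K. card {x. f x = v})" by simp
  also have "\<dots> = q * card H" using fib assms(2) by simp
  finally have "q * card H = q * q ^ (h - 1)" using assms(4) qh by auto
  then have cH: "card H = q ^ (h - 1)" using q2 by simp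
  define P where "P = q ^ (h - 1)"
  have Pq: "P \<ge> q" unfolding P_def using power_increasing[of 1 "h - 1" q] q2 assms(3) by simp
  define B0 where "B0 = {\<alpha>. f (1 / \<alpha>) = 0}"
  have "B0 = (\<lambda>x. 1 / x) ` H"
  proof (intro set_eqI iffI)
    fix x assume "x \<in> B0"
    then have "1 / x \<in> H" "x = 1 / (1 / x)" unfolding B0_def H_def by simp_all
    then show "x \<in> (\<lambda>x. 1 / x) ` H" by blast
  next
    fix x assume "x \<in> (\<lambda>x. 1 / x) ` H"
    then show "x \<in> B0" unfolding B0_def H_def by auto
  qed
  moreover have "inj_on (\<lambda>x::'a. 1 / x) H"
    by (rule inj_onI) (metis inverse_eq_divide inverse_inverse_eq)
  ultimately have cB0: "card B0 = P" using cH P_def by (simp add: card_image)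
  have "0 \<in> K \<inter> B0" unfolding B0_def using sf_basic(1)[OF sf] lf_0[OF lf] by simp
  then have "K \<inter> B0 \<noteq> {}" by blast
  then have "card (K \<inter> B0) \<ge> 1" by (simp add: Suc_le_eq card_gt_0_iff)
  then have cKB: "card (K \<union> B0) + 1 \<le> q + P"
    using card_Un_Int[of K B0] cB0 assms(2) by simp
  define B where "B k = {\<alpha>. f ((k - 1) / (k * (k - 1) * \<alpha> - k ^ 2)) = 1}" for k
  have cB: "card (B k) \<le> P" if "k \<in> K - {0,1}" for k
  proof -
    have k0: "k \<noteq> 0" "k - 1 \<noteq> 0" using that by auto
    have "inj_on (\<lambda>\<alpha>. (k - 1) / (k * (k - 1) * \<alpha> - k ^ 2)) (B k)"
    proof (rule inj_onI)
      fix x y assume "(k - 1) / (k * (k - 1) * x - k ^ 2) = (k - 1) / (k * (k - 1) * y - k ^ 2)"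
      then have "inverse (k * (k - 1) * x - k ^ 2) = inverse (k * (k - 1) * y - k ^ 2)"
        using k0 by (simp add: divide_inverse)
      then have "k * (k - 1) * x = k * (k - 1) * y" by simp
      then show "x = y" using k0 by simp
    qed
    moreover have "(\<lambda>\<alpha>. (k - 1) / (k * (k - 1) * \<alpha> - k ^ 2)) ` (B k) \<subseteq> {x. f x = 1}"
      unfolding B_def by auto
    ultimately have "card (B k) \<le> card {x. f x = 1}"
      by (meson card_inj_on_le finite)
    then show ?thesis using fib[OF sf_basic(2)[OF sf]] cH P_def by simp
  qed
  have "card (\<Union>k\<in>K - {0,1}. B k) \<le> (\<Sum>k\<in>K - {0,1}. card (B k))"
    by (rule card_UN_le) simp
  also have "\<dots> \<le> (\<Sum>k\<in>K - {0,1}. P)" by (rule sum_mono) (use cB in auto)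
  also have "\<dots> = (q - 2) * P"
  proof -
    have "{0,1} \<subseteq> K" using sf_basic[OF sf] by auto
    then have "card (K - {0,1}) = q - 2" using assms(2) by (simp add: card_Diff_subset)
    then show ?thesis by simp
  qed
  finally have cU: "card (\<Union>k\<in>K - {0,1}. B k) \<le> (q - 2) * P" .
  define U where "U = K \<union> B0 \<union> (\<Union>k\<in>K - {0,1}. B k)"
  have "card U \<le> card (K \<union> B0) + card (\<Union>k\<in>K - {0,1}. B k)"
    unfolding U_def by (rule card_Un_le)
  also have "\<dots> < q * P"
  proof -
    obtain r where r: "q = r + 2" using q2 by (metis le_add_diff_inverse2)
    show ?thesis using cKB cU Pq unfolding r by (simp add: algebra_simps)
  qed
  also have "q * P = card (UNIV :: 'a set)" using assms(4) qh unfolding P_def by simp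
  finally have "U \<noteq> UNIV" by auto
  then obtain \<alpha> where a: "\<alpha> \<notin> U" by blast
  then have aK: "\<alpha> \<notin> K" unfolding U_def by auto
  obtain g where g: "linear_functional K g \<and> g 1 = 1 \<and> g \<alpha> = 1"
    using g_exists[OF sf lf x0 aK] by blast
  show ?thesis
    apply (rule exI[of _ \<alpha>], rule exI[of _ g])
    using a g aK unfolding U_def B0_def B_def by auto
qed

end
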